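(* Assume [LJ1]–[LJ4] and let $\ell>0$. For every $\varepsilon>0$ there exists $\eta=\eta(\varepsilon)>0$ such that for all $z\in\mathbb R$ $$F(z):=\inf_{a:\,|a-\min\{\ell,\gamma\}|\ge\varepsilon}\tfrac12\big(J_1(a)+J_1(2z-a)\big)+J_2(z)-(J_0^{**})'(\ell)(z-\ell)-J_0^{**}(\ell)\ \ge\ \eta.$$
   Context: Potentials: $J_1,J_2:\mathbb R\to(-\infty,+\infty]$; $J_{CB}:=J_1+J_2$; $J_0(z):=J_2(z)+\frac12\inf\{J_1(z_1)+J_1(z_2):z_1+z_2=2z\}$; $J_0^{**}$ is the convex lower semicontinuous envelope of $J_0$ (under the hypotheses below it is differentiable, and $(J_0^{**})'(\ell)$ denotes its derivative at $\ell$). Hypotheses: [LJ1] $\{z:J_0(z)=J_0^{**}(z)\}\cap\{z:J_0\text{ is affine in a neighbourhood of }z\}=\emptyset$. [LJ2] for every $z$ with $J_0(z)=J_0^{**}(z)$, the set $\{(z_1,z_2):z_1+z_2=2z,\ J_0(z)=J_2(z)+\frac12(J_1(z_1)+J_1(z_2))\}$ has exactly one element. [LJ3] $J_1,J_2$ are $C^{1,\alpha}$ on their domains for some $0<\alpha\le1$, $J_0$ is $C^1$ on its domain, $\operatorname{dom}J_1=\operatorname{dom}J_2\supset(0,+\infty)$, $\lim_{z\to+\infty}J_j(z)=0$ ($j=1,2$) and $\lim_{z\to+\infty}J_0(z)=:J_0(+\infty)\in\mathbb R$. [LJ4] there is a convex $\Psi:\mathbb R\to[0,+\infty]$ with $\lim_{z\to-\infty}\Psi(z)/|z|=+\infty$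 and constants $c_1,c_2>0$ with $c_1(\Psi(z)-1)\le J_j(z)\le c_2\max\{\Psi(z),|z|\}$ for all $z\in\mathbb R$, $j=1,2$; there are $\delta_1,\delta_2,\gamma>0$ with $\{\delta_j\}=\operatorname{argmin}J_j$ and $\{\gamma\}=\operatorname{argmin}J_0$; $J_j$ is strictly convex on $(-\infty,\delta_j)\cap\operatorname{dom}J_j$; $J_0(\gamma)<J_0(+\infty)$; and $J_0(z)=J_0^{**}(z)$ for all $z\le\gamma$. *)

theory Defs
  imports "HOL-Analysis.Analysis" "HOL-Library.Extended_Real"
begin

text \<open>Potentials are extended-real valued, with values in (-inf, +inf].\<close>

definition edom :: "(real \<Rightarrow> ereal) \<Rightarrow> real set" where
  "edom f = {z. f z < \<infinity>}"

definition fconj :: "(real \<Rightarrow> ereal) \<Rightarrow> real \<Rightarrow> ereal" where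
  "fconj f p = (SUP x. ereal (p * x) - f x)"

definition biconj :: "(real \<Rightarrow> ereal) \<Rightarrow> real \<Rightarrow> ereal" where
  "biconj f z = (SUP p. ereal (p * z) - fconj f p)"

definition J0fun :: "(real \<Rightarrow> ereal) \<Rightarrow> (real \<Rightarrow> ereal) \<Rightarrow> real \<Rightarrow> ereal" where
  "J0fun J1 J2 z = J2 z + Inf {J1 z1 + J1 z2 | z1 z2. z1 + z2 = 2 * z} / 2"

definition econvex_on :: "real set \<Rightarrow> (real \<Rightarrow> ereal) \<Rightarrow> bool" where
  "econvex_on S f \<longleftrightarrow> (\<forall>x\<in>S. \<forall>y\<in>S. \<forall>t::real. 0 \<le> t \<and> t \<le> 1 \<longrightarrow>
      f ((1 - t) * x + t * y) \<le> ereal (1 - t) * f x + ereal t * f y)"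

definition estrict_convex_on :: "real set \<Rightarrow> (real \<Rightarrow> ereal) \<Rightarrow> bool" where
  "estrict_convex_on S f \<longleftrightarrow> (\<forall>x\<in>S. \<forall>y\<in>S. \<forall>t::real. x \<noteq> y \<and> 0 < t \<and> t < 1 \<longrightarrow>
      f ((1 - t) * x + t * y) < ereal (1 - t) * f x + ereal t * f y)"

definition C1alpha_on_dom :: "real \<Rightarrow> (real \<Rightarrow> ereal) \<Rightarrow> bool" where
  "C1alpha_on_dom \<alpha> f \<longleftrightarrow> (\<exists>f'. (\<forall>x\<in>edom f.
        ((\<lambda>y. real_of_ereal (f y)) has_real_derivative f' x) (at x within edom f)) \<and>
     (\<forall>K. compact K \<and> K \<subseteq> edom f \<longrightarrow>
        (\<exists>C. \<forall>x\<in>K. \<forall>y\<in>K. \<bar>f' x - f' y\<bar> \<le> C * \<bar>x - y\<bar> powr \<alpha>)))"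

definition C1_on_dom :: "(real \<Rightarrow> ereal) \<Rightarrow> bool" where
  "C1_on_dom f \<longleftrightarrow> (\<exists>f'. (\<forall>x\<in>edom f.
        ((\<lambda>y. real_of_ereal (f y)) has_real_derivative f' x) (at x within edom f)) \<and>
     continuous_on (edom f) f')"

definition locally_affine_at :: "(real \<Rightarrow> ereal) \<Rightarrow> real \<Rightarrow> bool" where
  "locally_affine_at f z \<longleftrightarrow> (\<exists>r>0. \<exists>a b. \<forall>x\<in>ball z r. f x = ereal (a * x + b))"

end

theory Submission
  imports Defs
begin


lemma fconj_ge: "ereal (p * x) - f x \<le> fconj f p"
  unfolding fconj_def by (rule SUP_upper) simp

lemma biconj_le: "biconj f z \<le> f z"
  unfolding biconj_def
proof (rule SUP_least)
  fix p :: real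
  have "ereal (p * z) - f z \<le> fconj f p" by (rule fconj_ge)
  then show "ereal (p * z) - fconj f p \<le> f z"
    by (cases "f z"; cases "fconj f p") auto
qed

lemma biconj_ge_lower: assumes "\<And>x. ereal m \<le> f x" shows "ereal m \<le> biconj f z"
proof -
  have h1: "fconj f 0 \<le> ereal (-m)"
    unfolding fconj_def
  proof (rule SUP_least)
    fix x show "ereal (0 * x) - f x \<le> ereal (- m)" using assms[of x]
      by (cases "f x") auto
  qed
  have h2: "ereal (0 * z) - fconj f 0 \<le> biconj f z"
    unfolding biconj_def by (rule SUP_upper) simp
  show ?thesis
  proof (cases "fconj f 0")
    case (real r)
    then have "m \<le> - r" using h1 by simp
    then have "ereal m \<le> ereal (0*z) - fconj f 0" using real by simp
    then show ?thesis using h2 by (rule order.trans)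
  qed (use h1 h2 in auto)
qed

lemma fconj_not_minf: assumes "f x0 \<noteq> \<infinity>" shows "fconj f p \<noteq> -\<infinity>"
  using fconj_ge[of p x0 f] assms by (cases "f x0") auto

lemma biconj_convex:
  assumes "f x0 \<noteq> \<infinity>" "biconj f x = ereal gx" "biconj f y = ereal gy" "0 \<le> t" "t \<le> 1"
  shows "biconj f ((1-t)*x + t*y) \<le> ereal ((1-t)*gx + t*gy)"
  unfolding biconj_def
proof (rule SUP_least)
  fix p :: real
  have nm: "fconj f p \<noteq> -\<infinity>" by (rule fconj_not_minf[of f x0 p, OF assms(1)])
  have hx: "ereal (p * x) - fconj f p \<le> ereal gx" using assms(2) unfolding biconj_def
    by (metis SUP_upper UNIV_I)
  have hy: "ereal (p * y) - fconj f p \<le> ereal gy" using assms(3) unfolding biconj_def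
    by (metis SUP_upper UNIV_I)
  show "ereal (p * ((1 - t) * x + t * y)) - fconj f p \<le> ereal ((1 - t) * gx + t * gy)"
  proof (cases "fconj f p")
    case (real c)
    have "p*x - c \<le> gx" "p*y - c \<le> gy" using hx hy real by auto
    then have "(1-t)*(p*x - c) + t*(p*y-c) \<le> (1-t)*gx + t*gy"
      using assms(4,5) by (intro add_mono mult_left_mono) auto
    then show ?thesis using real by (simp add: algebra_simps)
  qed (use nm in auto)
qed

lemma biconj_seq_le:
  assumes "x \<longlonglongrightarrow> b" "\<And>n. f (x n) \<le> ereal M"
  shows "biconj f b \<le> ereal M"
  unfolding biconj_def
proof (rule SUP_least)
  fix p :: real
  show "ereal (p * b) - fconj f p \<le> ereal M"
  proof (cases "fconj f p")
    case (real c)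
    have le: "p * b - c \<le> p * (b - x n) + M" for n
    proof -
      have "ereal (p * x n) - f (x n) \<le> ereal c" using fconj_ge[of p "x n" f] real by simp
      then have "p * x n - M \<le> c" using assms(2)[of n] by (cases "f (x n)") auto
      then show ?thesis by (simp add: algebra_simps)
    qed
    have "(\<lambda>n. p * (b - x n) + M) \<longlonglongrightarrow> p * (b - b) + M"
      by (intro tendsto_intros assms(1))
    then have "p * b - c \<le> p * (b - b) + M"
      using le by (intro LIMSEQ_le_const) auto
    then show ?thesis using real by simp
  next
    case MInf
    have "f (x 0) \<noteq> \<infinity>" using assms(2)[of 0] by auto
    then show ?thesis using fconj_not_minf[of f "x 0" p] MInf by simp
  qed auto
qed




locale LJ =
  fixes J1 J2 \<Psi> :: "real \<Rightarrow> ereal" and c1 c2 \<gamma> J0inf ell :: real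
  assumes J1_ninf: "\<And>z. J1 z \<noteq> -\<infinity>"
      and J2_ninf: "\<And>z. J2 z \<noteq> -\<infinity>"
      and LJ1: "{z. J0fun J1 J2 z = biconj (J0fun J1 J2) z}
                  \<inter> {z. locally_affine_at (J0fun J1 J2) z} = {}"
      and LJ2: "\<And>z. z \<in> edom (J0fun J1 J2) \<Longrightarrow> J0fun J1 J2 z = biconj (J0fun J1 J2) z \<Longrightarrow>
                  (\<exists>!p. fst p + snd p = 2 * z \<and>
                        J0fun J1 J2 z = J2 z + (J1 (fst p) + J1 (snd p)) / 2)"
      and J0_C1: "C1_on_dom (J0fun J1 J2)"
      and dom_eq: "edom J1 = edom J2"
      and dom_pos: "{0<..} \<subseteq> edom J1"
      and J0_lim: "(J0fun J1 J2 \<longlongrightarrow> ereal J0inf) at_top"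
      and Psi_nonneg: "\<And>z. \<Psi> z \<ge> 0"
      and Psi_superlin: "((\<lambda>z. \<Psi> z / ereal \<bar>z\<bar>) \<longlongrightarrow> \<infinity>) at_bot"
      and c_pos: "c1 > 0" "c2 > 0"
      and J1_bounds: "\<And>z. ereal c1 * (\<Psi> z - 1) \<le> J1 z"
                     "\<And>z. J1 z \<le> ereal c2 * max (\<Psi> z) (ereal \<bar>z\<bar>)"
      and J2_bounds: "\<And>z. ereal c1 * (\<Psi> z - 1) \<le> J2 z"
                     "\<And>z. J2 z \<le> ereal c2 * max (\<Psi> z) (ereal \<bar>z\<bar>)"
      and gamma_pos: "\<gamma> > 0"
      and argmin_J0: "{x. \<forall>z. J0fun J1 J2 x \<le> J0fun J1 J2 z} = {\<gamma>}"
      and J0_gamma: "J0fun J1 J2 \<gamma> < ereal J0inf"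
      and J0_convex_left: "\<And>z. z \<le> \<gamma> \<Longrightarrow> J0fun J1 J2 z = biconj (J0fun J1 J2) z"
      and ell_pos: "ell > 0"
begin

abbreviation "J0 \<equiv> J0fun J1 J2"
abbreviation "G \<equiv> biconj J0"

lemma Jlow_gen: assumes "ereal c1 * (\<Psi> z - 1) \<le> J" shows "ereal c1 * (\<Psi> z - 1) \<le> J" "ereal (-c1) \<le> J"
proof -
  show "ereal c1 * (\<Psi> z - 1) \<le> J" by fact
  have "ereal (-c1) \<le> ereal c1 * (\<Psi> z - 1)"
  proof (cases "\<Psi> z")
    case (real r)
    have e: "ereal c1 * (\<Psi> z - 1) = ereal (c1*(r-1))" using real by (simp add: one_ereal_def)
    have "0 \<le> r" using Psi_nonneg[of z] real by simp
    then have "-c1 \<le> c1*(r-1)" using c_pos by (simp add: algebra_simps)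
    then show ?thesis using e by simp
  qed (use Psi_nonneg[of z] c_pos in auto)
  then show "ereal (-c1) \<le> J" using assms by (rule order.trans)
qed

lemma J1_low: "ereal (-c1) \<le> J1 z" by (rule Jlow_gen(2)[OF J1_bounds(1)])
lemma J2_low: "ereal (-c1) \<le> J2 z" by (rule Jlow_gen(2)[OF J2_bounds(1)])

lemma J0_upper: "J0 z \<le> J2 z + (J1 a + J1 (2*z - a)) / 2"
proof -
  have "Inf {J1 z1 + J1 z2 | z1 z2. z1 + z2 = 2 * z} \<le> J1 a + J1 (2*z - a)"
    by (rule Inf_lower, intro CollectI exI[of _ a] exI[of _ "2*z-a"]) simp
  then have "Inf {J1 z1 + J1 z2 | z1 z2. z1 + z2 = 2 * z} / 2 \<le> (J1 a + J1 (2*z - a)) / 2"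
    by (simp add: ereal_divide_right_mono)
  then show ?thesis unfolding J0fun_def by (rule add_left_mono)
qed

lemma J0_low: "ereal (-2*c1) \<le> J0 z"
proof -
  have "ereal (-2*c1) \<le> Inf {J1 z1 + J1 z2 | z1 z2. z1 + z2 = 2 * z}"
  proof (rule Inf_greatest, clarify)
    fix z1 z2 :: real
    have "ereal (-c1) + ereal (-c1) \<le> J1 z1 + J1 z2" by (intro add_mono J1_low)
    then show "ereal (-2*c1) \<le> J1 z1 + J1 z2" by simp
  qed
  then have "ereal (-c1) \<le> Inf {J1 z1 + J1 z2 | z1 z2. z1 + z2 = 2 * z} / 2"
    by (cases "Inf {J1 z1 + J1 z2 | z1 z2. z1 + z2 = 2 * z}") auto
  then have "ereal (-c1) + ereal (-c1) \<le> J2 z + Inf {J1 z1 + J1 z2 | z1 z2. z1 + z2 = 2 * z} / 2"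
    by (intro add_mono J2_low)
  then show ?thesis unfolding J0fun_def by simp
qed

lemma J_pos_fin: "z > 0 \<Longrightarrow> J1 z < \<infinity>" "z > 0 \<Longrightarrow> J2 z < \<infinity>"
  using dom_pos dom_eq unfolding edom_def by auto

lemma J0_pos_fin: assumes "z > 0" shows "J0 z < \<infinity>"
proof -
  have "J2 z + (J1 z + J1 (2*z - z)) / 2 < \<infinity>"
    using J_pos_fin[OF assms] J1_ninf[of z] J2_ninf[of z] by (cases "J1 z"; cases "J2 z") auto
  then show ?thesis using J0_upper[of z z] by auto
qed

lemma J0_ninf: "J0 z \<noteq> -\<infinity>" using J0_low[of z] by auto

lemma J0_gamma_min: "J0 \<gamma> \<le> J0 z" using argmin_J0 by auto

definition "g0 = real_of_ereal (J0 \<gamma>)"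

lemma J0_gamma_eq: "J0 \<gamma> = ereal g0"
  using J0_ninf[of \<gamma>] J0_gamma unfolding g0_def by (cases "J0 \<gamma>") auto

lemma g0_lt: "g0 < J0inf" using J0_gamma J0_gamma_eq by simp

lemma G_low: "ereal g0 \<le> G z"
  by (rule biconj_ge_lower) (use J0_gamma_min J0_gamma_eq in metis)

lemma G_le: "G z \<le> J0 z" by (rule biconj_le)

lemma G_fin: "G z \<noteq> \<infinity> \<Longrightarrow> G z = ereal (real_of_ereal (G z))"
  using G_low[of z] by (cases "G z") auto

lemma G_pos_fin: "z > 0 \<Longrightarrow> G z \<noteq> \<infinity>"
  using G_le[of z] J0_pos_fin[of z] by auto

lemma G_conv:
  assumes "G x = ereal gx" "G y = ereal gy" "0 \<le> t" "t \<le> 1"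
  shows "G ((1-t)*x + t*y) \<le> ereal ((1-t)*gx + t*gy)"
  by (rule biconj_convex[of J0 \<gamma>]) (use assms J0_gamma_eq in auto)

end



context LJ begin

lemma G_right: assumes "\<gamma> \<le> z" shows "G z = ereal g0"
proof (cases "z = \<gamma>")
  case True
  then show ?thesis using J0_convex_left[of \<gamma>] J0_gamma_eq by simp
next
  case False
  then have zg: "z > \<gamma>" using assms by simp
  have "eventually (\<lambda>w. J0 w < ereal (J0inf + 1)) at_top"
    by (rule order_tendstoD(2)[OF J0_lim]) simp
  then obtain W where W: "\<And>w. w \<ge> W \<Longrightarrow> J0 w < ereal (J0inf + 1)"
    by (auto simp: eventually_at_top_linorder)
  define gz where "gz = real_of_ereal (G z)"
  have Gz: "G z = ereal gz" unfolding gz_def using G_fin G_pos_fin zg gamma_pos by simp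
  have "gz \<ge> g0" using G_low[of z] Gz by simp
  moreover have "\<not> gz > g0"
  proof
    assume gt: "gz > g0"
    define C where "C = J0inf + 1 - g0"
    have Cpos: "C > 0" using g0_lt unfolding C_def by simp
    define w where "w = max W (\<gamma> + (z-\<gamma>)*C/(gz-g0) + (z-\<gamma>) + 1)"
    have w1: "w \<ge> W" unfolding w_def by simp
    have q: "(z-\<gamma>)*C/(gz-g0) \<ge> 0" using zg gt Cpos by simp
    have "w \<ge> \<gamma> + (z-\<gamma>)*C/(gz-g0) + (z-\<gamma>) + 1" unfolding w_def by simp
    then have w2: "w - \<gamma> > (z-\<gamma>)*C/(gz-g0)" "w > z" using q zg by linarith+
    define t where "t = (z-\<gamma>)/(w-\<gamma>)"
    have t: "0 \<le> t" "t \<le> 1" unfolding t_def using zg w2 by auto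
    have wpos: "w - \<gamma> > 0" using w2 zg by simp
    have tw: "t*(w-\<gamma>) = z-\<gamma>" unfolding t_def using wpos by simp
    have "(1-t)*\<gamma> + t*w = \<gamma> + t*(w-\<gamma>)" by (simp add: algebra_simps)
    then have zt: "(1-t)*\<gamma> + t*w = z" using tw by simp
    have tC: "t * C < gz - g0"
    proof -
      have gpos: "gz - g0 > 0" using gt by simp
      have "(z-\<gamma>)*C < (w-\<gamma>)*(gz-g0)" using w2(1) pos_divide_less_eq[OF gpos] by simp
      moreover have "t*C = (z-\<gamma>)*C/(w-\<gamma>)" unfolding t_def by simp
      ultimately show ?thesis using pos_divide_less_eq[OF wpos] by (simp add: mult.commute)
    qed
    define gw where "gw = real_of_ereal (G w)"
    have Gw: "G w = ereal gw" unfolding gw_def using G_fin G_pos_fin w2 zg gamma_pos by simp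
    have "ereal gw < ereal (J0inf + 1)" using G_le[of w] W[OF w1] Gw by (metis le_less_trans)
    then have gwle: "gw \<le> J0inf + 1" by simp
    have "G z \<le> ereal ((1-t)*g0 + t*gw)"
      using G_conv[OF _ Gw t, of \<gamma> g0] J0_convex_left[of \<gamma>] J0_gamma_eq zt by simp
    then have "gz \<le> (1-t)*g0 + t*gw" using Gz by simp
    also have "\<dots> \<le> (1-t)*g0 + t*(J0inf+1)" using t gwle by (intro add_left_mono mult_left_mono) auto
    also have "\<dots> = g0 + t*C" unfolding C_def by (simp add: algebra_simps)
    finally show False using tC by simp
  qed
  ultimately show ?thesis using Gz by simp
qed

definition "j = (\<lambda>y. real_of_ereal (J0 y))"
definition "g = (\<lambda>y. real_of_ereal (G y))"

lemma J0_deriv: assumes "x > 0" shows "\<exists>d. (j has_real_derivative d) (at x)"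
proof -
  obtain f' where f': "\<And>x. x \<in> edom J0 \<Longrightarrow> (j has_real_derivative f' x) (at x within edom J0)"
    using J0_C1 unfolding C1_on_dom_def j_def by blast
  have sub: "{0<..} \<subseteq> edom J0" using J0_pos_fin unfolding edom_def by auto
  have "{0<..} \<subseteq> interior (edom J0)" by (rule interior_maximal[OF sub]) simp
  then have "x \<in> interior (edom J0)" using assms by auto
  then show ?thesis using f'[of x] sub assms at_within_interior[of x "edom J0"] by auto
qed

lemma J0_fin_pos: "x > 0 \<Longrightarrow> J0 x = ereal (j x)"
  unfolding j_def using J0_pos_fin[of x] J0_ninf[of x] by (cases "J0 x") auto

lemma g_eq_j: "x > 0 \<Longrightarrow> x \<le> \<gamma> \<Longrightarrow> g x = j x"
  unfolding g_def j_def using J0_convex_left by simp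

lemma deriv_less: assumes less: "ell < \<gamma>" shows "\<exists>D. (g has_real_derivative D) (at ell)"
proof -
  obtain d where d: "(j has_real_derivative d) (at ell)" using J0_deriv ell_pos by blast
  have "(g has_real_derivative d) (at ell)"
  proof (rule has_field_derivative_transform_within_open[OF d, of "{0<..<\<gamma>}"])
    show "open {0<..<\<gamma>}" by simp
    show "ell \<in> {0<..<\<gamma>}" using less ell_pos by simp
    fix x assume "x \<in> {0<..<\<gamma>}"
    then show "j x = g x" using g_eq_j[of x] by simp
  qed
  then show ?thesis by blast
qed

lemma deriv_greater: assumes greater: "ell > \<gamma>" shows "(g has_real_derivative 0) (at ell)"
proof -
  have c: "((\<lambda>_. g0) has_real_derivative 0) (at ell)" by simp
  show ?thesis
  proof (rule has_field_derivative_transform_within_open[OF c, of "{\<gamma><..}"])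
    show "open {\<gamma><..}" by simp
    show "ell \<in> {\<gamma><..}" using greater by simp
    fix x assume "x \<in> {\<gamma><..}"
    then show "g0 = g x" using G_right[of x] unfolding g_def by simp
  qed
qed

lemma deriv_equal: "(g has_real_derivative 0) (at \<gamma>)"
proof -
  obtain d where d: "(j has_real_derivative d) (at \<gamma>)" using J0_deriv gamma_pos by blast
  have "d = 0"
  proof (rule DERIV_local_min[OF d gamma_pos], intro allI impI)
    fix y assume "\<bar>\<gamma> - y\<bar> < \<gamma>"
    then have y: "y > 0" by simp
    have "J0 \<gamma> \<le> J0 y" by (rule J0_gamma_min)
    then show "j \<gamma> \<le> j y" using J0_fin_pos[OF y] J0_fin_pos[OF gamma_pos] by simp
  qed
  have gg: "g \<gamma> = g0" unfolding g_def using G_right[of \<gamma>] by simp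
  have jg: "j \<gamma> = g0" unfolding j_def using J0_gamma_eq by simp
  have "((\<lambda>y. (g y - g \<gamma>) / (y - \<gamma>)) \<longlongrightarrow> 0) (at \<gamma>)"
  proof (rule filterlim_split_at)
    have "((\<lambda>y. (j y - j \<gamma>) / (y - \<gamma>)) \<longlongrightarrow> 0) (at \<gamma>)"
      using d \<open>d = 0\<close> has_field_derivative_iff[of j 0 \<gamma> UNIV] by simp
    then have jl: "((\<lambda>y. (j y - j \<gamma>) / (y - \<gamma>)) \<longlongrightarrow> 0) (at_left \<gamma>)"
      unfolding filterlim_at_split by blast
    have "eventually (\<lambda>y. y \<in> {0<..<\<gamma>}) (at_left \<gamma>)" by (rule eventually_at_left_real) (rule gamma_pos)
    then have ev: "eventually (\<lambda>y. (j y - j \<gamma>) / (y - \<gamma>) = (g y - g \<gamma>) / (y - \<gamma>)) (at_left \<gamma>)"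
    proof (rule eventually_mono)
      fix y assume "y \<in> {0<..<\<gamma>}"
      then have "g y = j y" using g_eq_j[of y] by simp
      then show "(j y - j \<gamma>) / (y - \<gamma>) = (g y - g \<gamma>) / (y - \<gamma>)" using gg jg by simp
    qed
    show "((\<lambda>y. (g y - g \<gamma>) / (y - \<gamma>)) \<longlongrightarrow> 0) (at_left \<gamma>)"
      using tendsto_cong[OF ev] jl by simp
  next
    have "eventually (\<lambda>y. y \<in> {\<gamma><..<\<gamma>+1}) (at_right \<gamma>)" by (rule eventually_at_right_real) simp
    then have ev: "eventually (\<lambda>y. (\<lambda>_. 0::real) y = (g y - g \<gamma>) / (y - \<gamma>)) (at_right \<gamma>)"
    proof (rule eventually_mono)
      fix y assume "y \<in> {\<gamma><..<\<gamma>+1}"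
      then have "g y = g0" using G_right[of y] unfolding g_def by simp
      then show "(\<lambda>_. 0::real) y = (g y - g \<gamma>) / (y - \<gamma>)" using gg by simp
    qed
    have l0: "((\<lambda>_. 0::real) \<longlongrightarrow> 0) (at_right \<gamma>)" by (rule tendsto_const)
    show "((\<lambda>y. (g y - g \<gamma>) / (y - \<gamma>)) \<longlongrightarrow> 0) (at_right \<gamma>)"
      using tendsto_cong[OF ev, of 0] l0 by blast
  qed
  then show ?thesis using has_field_derivative_iff[of g 0 \<gamma> UNIV] by simp
qed

lemma G_deriv: "\<exists>D. (g has_real_derivative D) (at ell) \<and> (\<gamma> \<le> ell \<longrightarrow> D = 0)"
proof (cases ell \<gamma> rule: linorder_cases)
  case less
  then show ?thesis using deriv_less by auto
next
  case greater
  then show ?thesis using deriv_greater by auto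
next
  case equal
  then show ?thesis using deriv_equal by auto
qed

end



locale LJD = LJ +
  fixes D :: real
  assumes Dd: "(g has_real_derivative D) (at ell)"
      and D0: "\<gamma> \<le> ell \<Longrightarrow> D = 0"
begin

definition "T z = g ell + D * (z - ell)"

lemma G_eq_g: "G z \<noteq> \<infinity> \<Longrightarrow> G z = ereal (g z)"
  unfolding g_def using G_fin by simp

lemma G_ell: "G ell = ereal (g ell)" using G_eq_g G_pos_fin ell_pos by simp

lemma tangent: "ereal (T z) \<le> G z"
proof (cases "G z = \<infinity>")
  case False
  define A where "A = {x. G x \<noteq> \<infinity>}"
  have cvxA: "convex A"
  proof (rule convexI)
    fix x y r s :: real
    assume x: "x \<in> A" and y: "y \<in> A" and rs: "0 \<le> r" "0 \<le> s" "r + s = 1"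
    have "G ((1 - s) * x + s * y) \<le> ereal ((1 - s) * g x + s * g y)"
      by (rule G_conv) (use x y rs G_eq_g in \<open>auto simp: A_def\<close>)
    moreover have "r = 1 - s" using rs by simp
    ultimately show "r *\<^sub>R x + s *\<^sub>R y \<in> A" unfolding A_def by auto
  qed
  have cvx: "convex_on A g"
  proof (rule convex_onI[OF _ cvxA])
    fix t x y :: real assume t: "t > 0" "t < 1" and x: "x \<in> A" and y: "y \<in> A"
    have le: "G ((1-t)*x + t*y) \<le> ereal ((1-t)*g x + t*g y)"
      by (rule G_conv) (use x y t G_eq_g in \<open>auto simp: A_def\<close>)
    then have "G ((1-t)*x + t*y) \<noteq> \<infinity>" by auto
    then have "G ((1-t)*x + t*y) = ereal (g ((1-t)*x + t*y))" by (rule G_eq_g)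
    then show "g ((1 - t) *\<^sub>R x + t *\<^sub>R y) \<le> (1 - t) * g x + t * g y" using le by simp
  qed
  have sub: "{0<..} \<subseteq> A" unfolding A_def using G_pos_fin by auto
  have "{0<..} \<subseteq> interior A" by (rule interior_maximal[OF sub]) simp
  then have int: "ell \<in> interior A" using ell_pos by auto
  have zA: "z \<in> A" using False unfolding A_def by simp
  have "g z - g ell \<ge> D * (z - ell)"
    by (rule convex_on_imp_above_tangent[OF cvx convex_connected[OF cvxA] int zA])
       (rule has_field_derivative_at_within[OF Dd])
  then show ?thesis using G_eq_g[OF False] unfolding T_def by simp
qed simp

lemma T_le_J0: "ereal (T z) \<le> J0 z" using tangent[of z] G_le[of z] by (rule order.trans)

lemma right_case: assumes "\<gamma> \<le> ell" shows "T z = g0"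
proof -
  have "g ell = g0" unfolding g_def using G_right[OF assms] by simp
  then show ?thesis unfolding T_def using D0[OF assms] by simp
qed

lemma left_case_D: assumes "ell < \<gamma>" shows "D < 0"
proof -
  have "ereal (T \<gamma>) \<le> ereal g0" using tangent[of \<gamma>] G_right[of \<gamma>] by simp
  then have a: "T \<gamma> \<le> g0" by simp
  have "J0 ell \<noteq> J0 \<gamma>"
  proof
    assume "J0 ell = J0 \<gamma>"
    then have "ell \<in> {x. \<forall>z. J0 x \<le> J0 z}" using J0_gamma_min by simp
    then show False using argmin_J0 assms by simp
  qed
  then have "J0 ell > J0 \<gamma>" using J0_gamma_min[of ell] by simp
  moreover have "J0 ell = ereal (g ell)" using g_eq_j[of ell] J0_fin_pos[of ell] ell_pos assms by simp
  ultimately have "g ell > g0" using J0_gamma_eq by simp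
  then have "D * (\<gamma> - ell) < 0" using a unfolding T_def by simp
  then show ?thesis using assms by (simp add: mult_less_0_iff)
qed

lemma D_nonpos: "D \<le> 0"
  using left_case_D D0 by (cases "ell < \<gamma>") auto

lemma large_z: "\<exists>\<kappa>>0. \<exists>Z. \<forall>z\<ge>Z. ereal (T z + \<kappa>) \<le> J0 z"
proof (cases "\<gamma> \<le> ell")
  case True
  define \<kappa> where "\<kappa> = (J0inf - g0)/2"
  have kp: "\<kappa> > 0" using g0_lt unfolding \<kappa>_def by simp
  have "eventually (\<lambda>w. ereal (g0 + \<kappa>) < J0 w) at_top"
    by (rule order_tendstoD(1)[OF J0_lim]) (use g0_lt in \<open>simp add: \<kappa>_def field_simps\<close>)
  then obtain Z where "\<And>w. w \<ge> Z \<Longrightarrow> ereal (g0 + \<kappa>) < J0 w"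
    by (auto simp: eventually_at_top_linorder)
  then show ?thesis using kp right_case[OF True] by (intro exI[of _ \<kappa>]) (auto intro: less_imp_le)
next
  case False
  then have Dn: "D < 0" using left_case_D by simp
  define Z where "Z = ell + (g0 - g ell - 1)/D"
  have "\<forall>z\<ge>Z. ereal (T z + 1) \<le> J0 z"
  proof (intro allI impI)
    fix z assume "z \<ge> Z"
    then have "z - ell \<ge> (g0 - g ell - 1)/D" unfolding Z_def by simp
    then have "D * (z - ell) \<le> D * ((g0 - g ell - 1)/D)" using Dn by (intro mult_left_mono_neg) auto
    then have "T z + 1 \<le> g0" unfolding T_def using Dn by simp
    then show "ereal (T z + 1) \<le> J0 z" using J0_gamma_min[of z] J0_gamma_eq by (metis ereal_less_eq(3) order.trans)
  qed
  then show ?thesis by (intro exI[of _ 1]) auto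
qed

end



locale LJE = LJD +
  fixes \<alpha> :: real
  assumes J1_C1a: "C1alpha_on_dom \<alpha> J1"
      and J2_C1a: "C1alpha_on_dom \<alpha> J2"
begin

lemma cont_dom:
  assumes "C1alpha_on_dom \<alpha> J" "x \<in> edom J"
  shows "continuous (at x within edom J) (\<lambda>y. real_of_ereal (J y))"
proof -
  obtain f' where "\<forall>x\<in>edom J. ((\<lambda>y. real_of_ereal (J y)) has_real_derivative f' x) (at x within edom J)"
    using assms(1) unfolding C1alpha_on_dom_def by blast
  then show ?thesis using assms(2) DERIV_continuous by blast
qed

lemma seq_conv_dom:
  assumes "C1alpha_on_dom \<alpha> J" "b \<in> edom J" "\<And>n. x n \<in> edom J" "x \<longlonglongrightarrow> b"
  shows "(\<lambda>n. real_of_ereal (J (x n))) \<longlonglongrightarrow> real_of_ereal (J b)"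
  using cont_dom[OF assms(1,2)] assms(3,4) unfolding continuous_within_sequentially comp_def by blast

lemma other_bound:
  assumes "ereal c1 * (\<Psi> x - 1) \<le> ereal M" "\<bar>x\<bar> \<le> B"
  shows "ereal c2 * max (\<Psi> x) (ereal \<bar>x\<bar>) \<le> ereal (c2 * max (M/c1+1) B)"
proof (cases "\<Psi> x")
  case (real r)
  have "c1*(r-1) \<le> M" using assms(1) real by (simp add: one_ereal_def)
  then have "r - 1 \<le> M/c1" using pos_le_divide_eq[OF c_pos(1), of "r-1" M] by (simp add: mult.commute)
  then have "r \<le> M/c1 + 1" by simp
  then have "max r \<bar>x\<bar> \<le> max (M/c1+1) B" using assms(2) by (intro max.mono)
  then have "c2 * max r \<bar>x\<bar> \<le> c2 * max (M/c1+1) B" using c_pos by (intro mult_left_mono) auto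
  moreover have "ereal c2 * max (\<Psi> x) (ereal \<bar>x\<bar>) = ereal (c2 * max r \<bar>x\<bar>)"
    using real by (simp add: max_def)
  ultimately show ?thesis by simp
next
  case PInf
  then show ?thesis using assms(1) c_pos by simp
next
  case MInf
  then show ?thesis using Psi_nonneg[of x] by simp
qed

lemma J0_inf_outside: assumes "J2 b = \<infinity>" shows "J0 b = \<infinity>"
proof -
  have "J0 b \<ge> J2 b + ereal (-c1)"
  proof -
    have "ereal (-2*c1) \<le> Inf {J1 z1 + J1 z2 | z1 z2. z1 + z2 = 2 * b}"
    proof (rule Inf_greatest, clarify)
      fix z1 z2 :: real
      have "ereal (-c1) + ereal (-c1) \<le> J1 z1 + J1 z2" by (intro add_mono J1_low)
      then show "ereal (-2*c1) \<le> J1 z1 + J1 z2" by simp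
    qed
    then have "ereal (-c1) \<le> Inf {J1 z1 + J1 z2 | z1 z2. z1 + z2 = 2 * b} / 2"
      by (cases "Inf {J1 z1 + J1 z2 | z1 z2. z1 + z2 = 2 * b}") auto
    then show ?thesis unfolding J0fun_def by (rule add_left_mono)
  qed
  then show ?thesis using assms by simp
qed

lemma dom_limit:
  assumes "x \<longlonglongrightarrow> b" "\<And>n. J1 (x n) \<le> ereal M1" "\<And>n. J2 (x n) \<le> ereal M2"
  shows "b \<in> edom J1" "b \<in> edom J2"
proof -
  have "J1 b \<noteq> \<infinity>"
  proof
    assume inf: "J1 b = \<infinity>"
    then have "b \<notin> edom J2" using dom_eq unfolding edom_def by auto
    then have J2b: "J2 b = \<infinity>" unfolding edom_def by simp
    have "b \<le> 0"
    proof (rule ccontr)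
      assume "\<not> b \<le> 0"
      then have "b \<in> edom J1" using dom_pos by auto
      then show False using inf unfolding edom_def by simp
    qed
    then have "G b = \<infinity>" using J0_inf_outside[OF J2b] J0_convex_left[of b] gamma_pos by simp
    moreover have "G b \<le> ereal (M2 + M1)"
    proof (rule biconj_seq_le[OF assms(1)])
      fix n
      have "J0 (x n) \<le> J2 (x n) + (J1 (x n) + J1 (2 * x n - x n)) / 2" by (rule J0_upper)
      also have "\<dots> = J2 (x n) + (J1 (x n) + J1 (x n)) / 2" by simp
      also have "\<dots> \<le> ereal M2 + (ereal M1 + ereal M1) / 2"
        by (intro add_mono assms(2,3) ereal_divide_right_mono) simp
      also have "\<dots> = ereal (M2 + M1)" by simp
      finally show "J0 (x n) \<le> ereal (M2 + M1)" .
    qed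
    ultimately show False by simp
  qed
  then show "b \<in> edom J1" unfolding edom_def by simp
  then show "b \<in> edom J2" using dom_eq by simp
qed

end



lemma ereal3:
  fixes x y u :: ereal
  assumes "x \<noteq> -\<infinity>" "y \<noteq> -\<infinity>" "u \<noteq> -\<infinity>" "(x + y)/2 + u < ereal X"
  shows "x = ereal (real_of_ereal x) \<and> y = ereal (real_of_ereal y) \<and> u = ereal (real_of_ereal u) \<and>
         (real_of_ereal x + real_of_ereal y)/2 + real_of_ereal u < X"
  using assms by (cases x; cases y; cases u) auto

context LJE begin

lemma T_affine: "T ((1-t)*p + t*q) = (1-t)*T p + t*T q"
  unfolding T_def by (simp add: algebra_simps)

lemma touch: assumes "J0 z = ereal (T z)" shows "z = min ell \<gamma>"
proof (cases "\<gamma> \<le> ell")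
  case True
  then have "J0 z = J0 \<gamma>" using assms right_case[OF True] J0_gamma_eq by simp
  then have "z \<in> {x. \<forall>y. J0 x \<le> J0 y}" using J0_gamma_min by simp
  then show ?thesis using argmin_J0 True by simp
next
  case False
  then have lt: "ell < \<gamma>" by simp
  have Gz: "G z = ereal (T z)" using tangent[of z] G_le[of z] assms by simp
  have Gell: "G ell = ereal (T ell)" using G_ell unfolding T_def by simp
  have "z = ell"
  proof (rule ccontr)
    assume ne: "z \<noteq> ell"
    define p where "p = min z ell"
    define q where "q = max z ell"
    have pq: "p < q" using ne unfolding p_def q_def by (simp add: min_def max_def)
    have Gp: "G p = ereal (T p)" and Gq: "G q = ereal (T q)"
      unfolding p_def q_def using Gz Gell by (simp_all add: min_def max_def)
    define v where "v = min q \<gamma>"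
    have pv: "p < v" unfolding v_def using pq lt p_def by (simp add: min_def)
    have vq: "v \<le> q" "v \<le> \<gamma>" unfolding v_def by simp_all
    define w where "w = (p + v)/2"
    define r where "r = (v - p)/2"
    have rpos: "r > 0" unfolding r_def using pv by simp
    have aff: "J0 x = ereal (D * x + (g ell - D * ell))" if x: "x \<in> ball w r" for x
    proof -
      have "\<bar>w - x\<bar> < r" using x by (simp add: dist_real_def)
      then have "w - r < x \<and> x < w + r" by (auto simp: abs_less_iff)
      moreover have "w - r = p" "w + r = v" unfolding w_def r_def by (simp_all add: field_simps)
      ultimately have xb: "p < x" "x < v" by linarith+
      define t where "t = (x - p)/(q - p)"
      have t: "0 \<le> t" "t \<le> 1" unfolding t_def using xb vq pq by auto
      have tq: "t*(q-p) = x - p" unfolding t_def using pq by simp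
      have "(1-t)*p + t*q = p + t*(q-p)" by (simp add: algebra_simps)
      then have xt: "(1-t)*p + t*q = x" using tq by simp
      have "G x \<le> ereal ((1-t)*T p + t*T q)" using G_conv[OF Gp Gq t] xt by simp
      also have "(1-t)*T p + t*T q = T x" using T_affine[of t p q] xt by simp
      finally have "G x \<le> ereal (T x)" .
      then have "G x = ereal (T x)" using tangent[of x] by simp
      moreover have "J0 x = G x" using J0_convex_left[of x] xb vq by simp
      ultimately show ?thesis unfolding T_def by (simp add: algebra_simps)
    qed
    have "locally_affine_at J0 w"
      unfolding locally_affine_at_def using rpos aff by blast
    moreover have "J0 w = G w" using J0_convex_left[of w] vq pv unfolding w_def by simp
    ultimately show False using LJ1 by blast
  qed
  then show ?thesis using lt by simp
qed

lemma final:
  assumes "J1 a' = ereal x1" "J1 (2*z' - a') = ereal x2" "J2 z' = ereal x3"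
      and "(x1 + x2)/2 + x3 \<le> T z'"
  shows "a' = min ell \<gamma>"
proof -
  have S: "J2 z' + (J1 a' + J1 (2*z' - a'))/2 = ereal ((x1 + x2)/2 + x3)"
    using assms(1-3) by simp
  have c1: "J0 z' \<le> J2 z' + (J1 a' + J1 (2*z' - a'))/2" by (rule J0_upper)
  have c2: "J2 z' + (J1 a' + J1 (2*z' - a'))/2 \<le> ereal (T z')" using S assms(4) by simp
  have c3: "ereal (T z') \<le> G z'" by (rule tangent)
  have c4: "G z' \<le> J0 z'" by (rule G_le)
  have e1: "J0 z' = G z'" using c1 c2 c3 c4 by (meson antisym order.trans)
  have e2: "J0 z' = ereal (T z')" using c1 c2 c3 c4 by (meson antisym order.trans)
  have e3: "J0 z' = J2 z' + (J1 a' + J1 (2*z' - a'))/2" using c1 c2 c3 c4 by (meson antisym order.trans)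
  have zm: "z' = min ell \<gamma>" by (rule touch[OF e2])
  have dom: "z' \<in> edom J0" using e2 unfolding edom_def by simp
  obtain P where P: "\<And>p. fst p + snd p = 2 * z' \<and> J0 z' = J2 z' + (J1 (fst p) + J1 (snd p)) / 2 \<Longrightarrow> p = P"
    using LJ2[OF dom e1] by metis
  have "(a', 2*z' - a') = P" by (rule P) (simp add: e3)
  moreover have "(2*z' - a', a') = P" by (rule P) (simp add: e3 add.commute)
  ultimately have "(a', 2*z' - a') = (2*z' - a', a')" by (rule trans[OF _ sym])
  then have "a' = 2*z' - a'" by (metis prod.inject)
  then have "a' = z'" by linarith
  then show ?thesis using zm by simp
qed

lemma superlin: "\<exists>W>0. \<forall>w\<le>-W. ereal (K * \<bar>w\<bar>) \<le> \<Psi> w"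
proof -
  have "eventually (\<lambda>z. ereal K < \<Psi> z / ereal \<bar>z\<bar>) at_bot"
    by (rule order_tendstoD(1)[OF Psi_superlin]) simp
  then obtain N where N: "\<And>z. z \<le> N \<Longrightarrow> ereal K < \<Psi> z / ereal \<bar>z\<bar>"
    by (auto simp: eventually_at_bot_linorder)
  define W where "W = max 1 (-N)"
  have "\<forall>w\<le>-W. ereal (K * \<bar>w\<bar>) \<le> \<Psi> w"
  proof (intro allI impI)
    fix w assume w: "w \<le> -W"
    then have wN: "w \<le> N" and w1: "\<bar>w\<bar> \<ge> 1" unfolding W_def by auto
    have lt: "ereal K < \<Psi> w / ereal \<bar>w\<bar>" by (rule N[OF wN])
    show "ereal (K * \<bar>w\<bar>) \<le> \<Psi> w"
    proof (cases "\<Psi> w")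
      case (real s)
      have "w \<noteq> 0" using w1 by auto
      then have "K < s / \<bar>w\<bar>" using lt real by simp
      then have "K * \<bar>w\<bar> < s" using w1 by (simp add: pos_less_divide_eq)
      then show ?thesis using real by simp
    qed (use Psi_nonneg[of w] in auto)
  qed
  moreover have "W > 0" unfolding W_def by simp
  ultimately show ?thesis by blast
qed

end



lemma lin_aux: "(P::real) = 2*A + 2*Bp \<Longrightarrow> P - c \<le> xw \<Longrightarrow> Tz \<le> ge + E + Bp \<Longrightarrow> -c \<le> xy \<Longrightarrow>
   -c \<le> x3 \<Longrightarrow> (xw+xy)/2 + x3 < Tz + 1 \<Longrightarrow> A < ge + E + 2*c + 1"
  by (simp add: field_simps)

context LJE begin

lemma T_upper: assumes "w \<le> z" "w \<le> 0" shows "T z \<le> g ell + \<bar>D\<bar> * ell + \<bar>D\<bar> * \<bar>w\<bar>"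
proof -
  have Dn: "D \<le> 0" by (rule D_nonpos)
  have "D * z \<le> \<bar>D\<bar> * \<bar>w\<bar>"
  proof (cases "z \<ge> 0")
    case True
    then have "D * z \<le> 0" using Dn by (simp add: mult_nonpos_nonneg)
    then show ?thesis by (smt (verit) abs_ge_zero mult_nonneg_nonneg)
  next
    case False
    then have "-z \<le> \<bar>w\<bar>" using assms by simp
    then have "\<bar>D\<bar> * (-z) \<le> \<bar>D\<bar> * \<bar>w\<bar>" by (intro mult_left_mono) auto
    then show ?thesis using Dn by simp
  qed
  moreover have "-D * ell = \<bar>D\<bar> * ell" using Dn by simp
  ultimately show ?thesis unfolding T_def by (simp add: algebra_simps)
qed

lemma low_one:
  assumes W: "\<forall>w\<le>-W. ereal ((2*(\<bar>D\<bar>+1)/c1) * \<bar>w\<bar>) \<le> \<Psi> w"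
      and L: "L \<ge> W" "L \<ge> g ell + \<bar>D\<bar> * ell + 2*c1 + 1" "L > 0"
      and J: "J1 w = ereal xw" "xy \<ge> -c1" "x3 \<ge> -c1" "(xw + xy)/2 + x3 < T z + 1"
      and w: "w \<le> z" "w < -L"
  shows False
proof -
  have wW: "w \<le> -W" using w L by simp
  have Pw: "ereal ((2*(\<bar>D\<bar>+1)/c1) * \<bar>w\<bar>) \<le> \<Psi> w" using W wW by blast
  have low: "ereal c1 * (\<Psi> w - 1) \<le> ereal xw" using J1_bounds(1)[of w] J(1) by simp
  obtain s where s: "\<Psi> w = ereal s"
    using low c_pos Psi_nonneg[of w] by (cases "\<Psi> w") auto
  have s1: "(2*(\<bar>D\<bar>+1)/c1) * \<bar>w\<bar> \<le> s" using Pw s by simp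
  have s2: "c1 * (s - 1) \<le> xw" using low s by (simp add: one_ereal_def)
  have "c1 * ((2*(\<bar>D\<bar>+1)/c1) * \<bar>w\<bar>) \<le> c1 * s" using s1 c_pos by (intro mult_left_mono) auto
  moreover have "c1 * ((2*(\<bar>D\<bar>+1)/c1) * \<bar>w\<bar>) = 2*(\<bar>D\<bar>+1) * \<bar>w\<bar>" using c_pos by simp
  ultimately have xw: "2*(\<bar>D\<bar>+1) * \<bar>w\<bar> - c1 \<le> xw" using s2 by (simp add: algebra_simps)
  have wneg: "w \<le> 0" using w L c_pos by linarith
  have T: "T z \<le> g ell + \<bar>D\<bar> * ell + \<bar>D\<bar> * \<bar>w\<bar>" by (rule T_upper[OF w(1) wneg])
  have "\<bar>w\<bar> < g ell + \<bar>D\<bar> * ell + 2*c1 + 1"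
  proof -
    have "2*(\<bar>D\<bar>+1) * \<bar>w\<bar> = 2*\<bar>w\<bar> + 2*(\<bar>D\<bar>*\<bar>w\<bar>)" by (simp add: algebra_simps)
    then show ?thesis using lin_aux[OF _ xw T J(2-4)] by blast
  qed
  moreover have "\<bar>w\<bar> > L" using w L by simp
  ultimately show False using L by simp
qed

lemma low_bound:
  "\<exists>L>0. \<forall>z a x1 x2 x3. J1 a = ereal x1 \<longrightarrow> J1 (2*z-a) = ereal x2 \<longrightarrow> J2 z = ereal x3 \<longrightarrow>
     (x1+x2)/2 + x3 < T z + 1 \<longrightarrow> -L \<le> a \<and> -L \<le> 2*z - a"
proof -
  obtain W where W: "W > 0" "\<forall>w\<le>-W. ereal ((2*(\<bar>D\<bar>+1)/c1) * \<bar>w\<bar>) \<le> \<Psi> w"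
    using superlin by blast
  define L where "L = max W (g ell + \<bar>D\<bar> * ell + 2*c1 + 1)"
  have L: "L \<ge> W" "L \<ge> g ell + \<bar>D\<bar> * ell + 2*c1 + 1" "L > 0" unfolding L_def using W by auto
  have "\<forall>z a x1 x2 x3. J1 a = ereal x1 \<longrightarrow> J1 (2*z-a) = ereal x2 \<longrightarrow> J2 z = ereal x3 \<longrightarrow>
     (x1+x2)/2 + x3 < T z + 1 \<longrightarrow> -L \<le> a \<and> -L \<le> 2*z - a"
  proof (intro allI impI)
    fix z a x1 x2 x3
    assume J: "J1 a = ereal x1" "J1 (2*z-a) = ereal x2" "J2 z = ereal x3" "(x1+x2)/2 + x3 < T z + 1"
    have x1: "x1 \<ge> -c1" using J1_low[of a] J(1) by simp
    have x2: "x2 \<ge> -c1" using J1_low[of "2*z-a"] J(2) by simp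
    have x3: "x3 \<ge> -c1" using J2_low[of z] J(3) by simp
    show "-L \<le> a \<and> -L \<le> 2*z - a"
    proof (rule conjI; rule ccontr)
      assume "\<not> -L \<le> a"
      then have a: "a < -L" by simp
      show False
      proof (cases "a \<le> z")
        case True
        show False by (rule low_one[OF W(2) L J(1) x2 x3 J(4) True a])
      next
        case False
        then have "2*z - a < -L" "2*z - a \<le> z" using a by linarith+
        moreover have "(x2 + x1)/2 + x3 < T z + 1" using J(4) by (simp add: add.commute)
        ultimately show False using low_one[OF W(2) L J(2) x1 x3] by blast
      qed
    next
      assume "\<not> -L \<le> 2*z - a"
      then have b: "2*z - a < -L" by simp
      show False
      proof (cases "2*z - a \<le> z")
        case True
        have "(x2 + x1)/2 + x3 < T z + 1" using J(4) by (simp add: add.commute)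
        then show False using low_one[OF W(2) L J(2) x1 x3 _ True b] by blast
      next
        case False
        then have "a < -L" "a \<le> z" using b by linarith+
        then show False using low_one[OF W(2) L J(1) x2 x3 J(4)] by blast
      qed
    qed
  qed
  then show ?thesis using L(3) by blast
qed

end



context LJE begin

lemma fin1: "x \<in> edom J1 \<Longrightarrow> J1 x = ereal (real_of_ereal (J1 x))"
  using J1_ninf[of x] unfolding edom_def by (cases "J1 x") auto
lemma fin2: "x \<in> edom J2 \<Longrightarrow> J2 x = ereal (real_of_ereal (J2 x))"
  using J2_ninf[of x] unfolding edom_def by (cases "J2 x") auto

lemma T_bound: assumes "\<bar>z\<bar> \<le> R" shows "T z \<le> \<bar>g ell\<bar> + \<bar>D\<bar> * (R + ell)"
proof -
  have "\<bar>z - ell\<bar> \<le> R + ell" using assms ell_pos by linarith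
  then have "\<bar>D\<bar> * \<bar>z - ell\<bar> \<le> \<bar>D\<bar> * (R + ell)" by (intro mult_left_mono) auto
  then have "D * (z - ell) \<le> \<bar>D\<bar> * (R + ell)" by (metis abs_ge_self abs_mult order.trans)
  then show ?thesis unfolding T_def by linarith
qed

lemma other_J1: assumes "J1 x \<le> ereal M" "\<bar>x\<bar> \<le> B" shows "J2 x \<le> ereal (c2 * max (M/c1+1) B)"
proof -
  have "ereal c1 * (\<Psi> x - 1) \<le> ereal M" using J1_bounds(1)[of x] assms(1) by (rule order.trans)
  then show ?thesis using other_bound[OF _ assms(2)] J2_bounds(2)[of x] by (meson order.trans)
qed

lemma other_J2: assumes "J2 x \<le> ereal M" "\<bar>x\<bar> \<le> B" shows "J1 x \<le> ereal (c2 * max (M/c1+1) B)"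
proof -
  have "ereal c1 * (\<Psi> x - 1) \<le> ereal M" using J2_bounds(1)[of x] assms(1) by (rule order.trans)
  then show ?thesis using other_bound[OF _ assms(2)] J1_bounds(2)[of x] by (meson order.trans)
qed

lemma main:
  assumes eps: "\<epsilon> > 0"
  shows "\<exists>\<eta>>0. \<forall>z a. \<epsilon> \<le> \<bar>a - min ell \<gamma>\<bar> \<longrightarrow> ereal (T z + \<eta>) \<le> (J1 a + J1 (2*z - a))/2 + J2 z"
proof (rule ccontr)
  assume neg: "\<not> ?thesis"
  define m where "m = min ell \<gamma>"
  define j1 where "j1 x = real_of_ereal (J1 x)" for x
  define j2 where "j2 x = real_of_ereal (J2 x)" for x
  obtain \<kappa> Z where kZ: "\<kappa> > 0" "\<And>z. z \<ge> Z \<Longrightarrow> ereal (T z + \<kappa>) \<le> J0 z" using large_z by blast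
  obtain L where L: "L > 0" "\<And>z a x1 x2 x3. J1 a = ereal x1 \<Longrightarrow> J1 (2*z-a) = ereal x2 \<Longrightarrow> J2 z = ereal x3 \<Longrightarrow>
     (x1+x2)/2 + x3 < T z + 1 \<Longrightarrow> -L \<le> a \<and> -L \<le> 2*z - a" using low_bound by blast
  define \<eta> where "\<eta> n = min (min \<kappa> 1) (inverse (real (Suc n)))" for n
  have \<eta>pos: "\<eta> n > 0" for n unfolding \<eta>_def using kZ(1) by simp
  have \<eta>le: "\<eta> n \<le> \<kappa>" "\<eta> n \<le> 1" "\<eta> n \<le> inverse (real (Suc n))" for n unfolding \<eta>_def by auto
  have ex: "\<forall>n. \<exists>p. \<epsilon> \<le> \<bar>snd p - m\<bar> \<and>
      (J1 (snd p) + J1 (2*fst p - snd p))/2 + J2 (fst p) < ereal (T (fst p) + \<eta> n)"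
  proof
    fix n
    have "\<not> (\<forall>z a. \<epsilon> \<le> \<bar>a - m\<bar> \<longrightarrow> ereal (T z + \<eta> n) \<le> (J1 a + J1 (2*z - a))/2 + J2 z)"
      using neg \<eta>pos[of n] unfolding m_def by blast
    then obtain z a where "\<epsilon> \<le> \<bar>a - m\<bar>" "\<not> ereal (T z + \<eta> n) \<le> (J1 a + J1 (2*z - a))/2 + J2 z"
      by blast
    then show "\<exists>p. \<epsilon> \<le> \<bar>snd p - m\<bar> \<and>
      (J1 (snd p) + J1 (2*fst p - snd p))/2 + J2 (fst p) < ereal (T (fst p) + \<eta> n)"
      by (intro exI[of _ "(z,a)"]) (simp add: not_le)
  qed
  then obtain P where P: "\<And>n. \<epsilon> \<le> \<bar>snd (P n) - m\<bar> \<and>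
      (J1 (snd (P n)) + J1 (2*fst (P n) - snd (P n)))/2 + J2 (fst (P n)) < ereal (T (fst (P n)) + \<eta> n)"
    using choice[OF ex] by blast
  define z where "z n = fst (P n)" for n
  define a where "a n = snd (P n)" for n
  define b where "b n = 2 * z n - a n" for n
  have Pe: "\<epsilon> \<le> \<bar>a n - m\<bar>" for n using P[of n] unfolding a_def by blast
  have Pi: "(J1 (a n) + J1 (b n))/2 + J2 (z n) < ereal (T (z n) + \<eta> n)" for n
    using P[of n] unfolding a_def b_def z_def by blast
  have fin: "J1 (a n) = ereal (j1 (a n)) \<and> J1 (b n) = ereal (j1 (b n)) \<and> J2 (z n) = ereal (j2 (z n)) \<and>
      (j1 (a n) + j1 (b n))/2 + j2 (z n) < T (z n) + \<eta> n" for n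
    unfolding j1_def j2_def by (rule ereal3[OF J1_ninf J1_ninf J2_ninf Pi])
  have finl: "j1 (a n) + j1 (b n) + 2 * j2 (z n) < 2 * T (z n) + 2 * \<eta> n" for n
  proof -
    have "(j1 (a n) + j1 (b n))/2 + j2 (z n) < T (z n) + \<eta> n" using fin[of n] by blast
    then show ?thesis by (simp add: field_simps)
  qed
  have low1: "j1 x \<ge> -c1" for x using J1_low[of x] J1_ninf[of x] using c_pos unfolding j1_def by (cases "J1 x") auto
  have low2: "j2 x \<ge> -c1" for x using J2_low[of x] J2_ninf[of x] using c_pos unfolding j2_def by (cases "J2 x") auto
  have zZ: "z n < Z" for n
  proof (rule ccontr)
    assume "\<not> z n < Z"
    then have "ereal (T (z n) + \<kappa>) \<le> J0 (z n)" using kZ(2) by simp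
    also have "\<dots> \<le> J2 (z n) + (J1 (a n) + J1 (b n))/2" using J0_upper[of "z n" "a n"] unfolding b_def by simp
    also have "\<dots> = ereal ((j1 (a n) + j1 (b n))/2 + j2 (z n))" using fin[of n] by simp
    finally have "T (z n) + \<kappa> \<le> (j1 (a n) + j1 (b n))/2 + j2 (z n)" by simp
    then have "2 * T (z n) + 2 * \<kappa> \<le> j1 (a n) + j1 (b n) + 2 * j2 (z n)" by (simp add: field_simps)
    then show False using finl[of n] \<eta>le[of n] by linarith
  qed
  have ab: "-L \<le> a n \<and> -L \<le> b n" for n
  proof -
    have "j1 (a n) + j1 (b n) + 2 * j2 (z n) < 2 * T (z n) + 2" using finl[of n] \<eta>le[of n] by linarith
    then have "(j1 (a n) + j1 (b n))/2 + j2 (z n) < T (z n) + 1" by (simp add: field_simps)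
    then show ?thesis using L(2)[of "a n" "j1 (a n)" "z n" "j1 (b n)" "j2 (z n)"] fin[of n] unfolding b_def by blast
  qed
  have zl: "-L \<le> z n" for n using ab[of n] unfolding b_def by linarith
  have au: "a n \<le> 2*Z + L" for n using ab[of n] zZ[of n] unfolding b_def by linarith
  define S where "S = {-L..Z} \<times> {-L..2*Z+L}"
  have PS: "P n \<in> S" for n
    using zl[of n] zZ[of n] ab[of n] au[of n] unfolding S_def z_def a_def by (auto simp: mem_Times_iff)
  have "seq_compact S" unfolding S_def by (intro compact_imp_seq_compact compact_Times compact_Icc)
  then obtain l r where lr: "l \<in> S" "strict_mono r" "(P \<circ> r) \<longlonglongrightarrow> l"
    using PS by (metis seq_compactE)
  define zs where "zs = fst l"
  define as where "as = snd l"
  define bs where "bs = 2 * zs - as"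
  have zlim: "(\<lambda>n. z (r n)) \<longlonglongrightarrow> zs"
    using tendsto_fst[OF lr(3)] unfolding zs_def z_def comp_def by simp
  have alim: "(\<lambda>n. a (r n)) \<longlonglongrightarrow> as"
    using tendsto_snd[OF lr(3)] unfolding as_def a_def comp_def by simp
  have blim: "(\<lambda>n. b (r n)) \<longlonglongrightarrow> bs"
    unfolding b_def bs_def by (intro tendsto_intros zlim alim)
  define B where "B = 2*\<bar>Z\<bar> + 2*L"
  have zB: "\<bar>z n\<bar> \<le> B" and aB: "\<bar>a n\<bar> \<le> B" and bB: "\<bar>b n\<bar> \<le> B" for n
    using zl[of n] zZ[of n] ab[of n] au[of n] L(1) unfolding B_def b_def by auto
  define CT where "CT = \<bar>g ell\<bar> + \<bar>D\<bar> * (B + ell)"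
  have "B + ell \<ge> 0" unfolding B_def using ell_pos L(1) by simp
  then have CT0: "CT \<ge> 0" unfolding CT_def using mult_nonneg_nonneg[OF abs_ge_zero[of D]] by (simp add: add_nonneg_nonneg)
  define M where "M = 2*CT + 2 + 3*c1"
  have jb: "j1 (a n) \<le> M \<and> j1 (b n) \<le> M \<and> j2 (z n) \<le> M" for n
  proof -
    have "T (z n) \<le> CT" unfolding CT_def by (rule T_bound[OF zB])
    then have "j1 (a n) + j1 (b n) + 2 * j2 (z n) < 2 * CT + 2" using finl[of n] \<eta>le[of n] by linarith
    then show ?thesis using low1[of "a n"] low1[of "b n"] low2[of "z n"] CT0 c_pos unfolding M_def by linarith
  qed
  define M' where "M' = c2 * max (M/c1+1) B"
  have Ja: "J1 (a n) \<le> ereal M" "J2 (a n) \<le> ereal M'" for n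
  proof -
    show "J1 (a n) \<le> ereal M" using fin[of n] jb[of n] by simp
    then show "J2 (a n) \<le> ereal M'" unfolding M'_def by (rule other_J1[OF _ aB])
  qed
  have Jb: "J1 (b n) \<le> ereal M" "J2 (b n) \<le> ereal M'" for n
  proof -
    show "J1 (b n) \<le> ereal M" using fin[of n] jb[of n] by simp
    then show "J2 (b n) \<le> ereal M'" unfolding M'_def by (rule other_J1[OF _ bB])
  qed
  have Jz: "J2 (z n) \<le> ereal M" "J1 (z n) \<le> ereal M'" for n
  proof -
    show "J2 (z n) \<le> ereal M" using fin[of n] jb[of n] by simp
    then show "J1 (z n) \<le> ereal M'" unfolding M'_def by (rule other_J2[OF _ zB])
  qed
  have as_dom: "as \<in> edom J1" by (rule dom_limit(1)[OF alim Ja(1) Ja(2)])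
  have bs_dom: "bs \<in> edom J1" by (rule dom_limit(1)[OF blim Jb(1) Jb(2)])
  have zs_dom: "zs \<in> edom J2" by (rule dom_limit(2)[OF zlim Jz(2) Jz(1)])
  have an_dom: "a (r n) \<in> edom J1" and bn_dom: "b (r n) \<in> edom J1" and zn_dom: "z (r n) \<in> edom J2" for n
    using fin[of "r n"] unfolding edom_def by auto
  have ja: "(\<lambda>n. j1 (a (r n))) \<longlonglongrightarrow> j1 as"
    unfolding j1_def by (rule seq_conv_dom[OF J1_C1a as_dom an_dom alim])
  have jbl: "(\<lambda>n. j1 (b (r n))) \<longlonglongrightarrow> j1 bs"
    unfolding j1_def by (rule seq_conv_dom[OF J1_C1a bs_dom bn_dom blim])
  have jz: "(\<lambda>n. j2 (z (r n))) \<longlonglongrightarrow> j2 zs"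
    unfolding j2_def by (rule seq_conv_dom[OF J2_C1a zs_dom zn_dom zlim])
  have Tl: "(\<lambda>n. T (z (r n))) \<longlonglongrightarrow> T zs"
    unfolding T_def by (intro tendsto_intros zlim)
  have hl: "(\<lambda>n. (j1 (a (r n)) + j1 (b (r n)))/2 + j2 (z (r n)) - T (z (r n)))
      \<longlonglongrightarrow> (j1 as + j1 bs)/2 + j2 zs - T zs"
    by (intro tendsto_intros ja jbl jz Tl) simp
  have il: "(\<lambda>n. inverse (real (Suc (r n)))) \<longlonglongrightarrow> 0"
    using LIMSEQ_subseq_LIMSEQ[OF LIMSEQ_inverse_real_of_nat lr(2)] unfolding comp_def by simp
  have hle: "(j1 (a (r n)) + j1 (b (r n)))/2 + j2 (z (r n)) - T (z (r n)) \<le> inverse (real (Suc (r n)))" for n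
  proof -
    have "j1 (a (r n)) + j1 (b (r n)) + 2 * j2 (z (r n)) - 2 * T (z (r n)) \<le> 2 * inverse (real (Suc (r n)))"
      using finl[of "r n"] \<eta>le[of "r n"] by linarith
    then show ?thesis by (simp add: field_simps)
  qed
  have hs: "(j1 as + j1 bs)/2 + j2 zs - T zs \<le> 0"
    by (rule LIMSEQ_le[OF hl il]) (use hle in blast)
  have el: "(\<lambda>n. \<bar>a (r n) - m\<bar>) \<longlonglongrightarrow> \<bar>as - m\<bar>" by (intro tendsto_intros alim)
  have eps_as: "\<epsilon> \<le> \<bar>as - m\<bar>" by (rule LIMSEQ_le_const[OF el]) (use Pe in blast)
  have "as = min ell \<gamma>"
  proof (rule final)
    show "J1 as = ereal (j1 as)" unfolding j1_def by (rule fin1[OF as_dom])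
    show "J1 (2 * zs - as) = ereal (j1 bs)" unfolding j1_def bs_def by (rule fin1[OF bs_dom[unfolded bs_def]])
    show "J2 zs = ereal (j2 zs)" unfolding j2_def by (rule fin2[OF zs_dom])
    show "(j1 as + j1 bs)/2 + j2 zs \<le> T zs" using hs by simp
  qed
  then show False using eps_as eps unfolding m_def by simp
qed

end



context LJE begin

lemma ineq:
  assumes H: "\<forall>z a. \<epsilon> \<le> \<bar>a - min ell \<gamma>\<bar> \<longrightarrow> ereal (T z + \<eta>) \<le> (J1 a + J1 (2*z - a))/2 + J2 z"
  shows "ereal \<eta> \<le> Inf ((\<lambda>a. (J1 a + J1 (2 * z - a)) / 2) ` {a. \<bar>a - min ell \<gamma>\<bar> \<ge> \<epsilon>})
                + J2 z - ereal (D * (z - ell)) - biconj (J0fun J1 J2) ell"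
proof -
  define X where "X = Inf ((\<lambda>a. (J1 a + J1 (2 * z - a)) / 2) ` {a. \<bar>a - min ell \<gamma>\<bar> \<ge> \<epsilon>})"
  have Xlow: "ereal (-c1) \<le> X" unfolding X_def
  proof (rule Inf_greatest, clarify)
    fix a
    have "ereal (-c1) + ereal (-c1) \<le> J1 a + J1 (2*z-a)" by (intro add_mono J1_low)
    then show "ereal (-c1) \<le> (J1 a + J1 (2*z-a))/2"
      by (cases "J1 a + J1 (2*z-a)") auto
  qed
  have Gell: "biconj (J0fun J1 J2) ell = ereal (g ell)" by (rule G_ell)
  show ?thesis
  proof (cases "J2 z")
    case PInf
    then show ?thesis using Xlow Gell unfolding X_def[symmetric] by (cases X) auto
  next
    case MInf
    then show ?thesis using J2_ninf[of z] by simp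
  next
    case (real s)
    have "ereal (T z + \<eta> - s) \<le> X" unfolding X_def
    proof (rule Inf_greatest, clarify)
      fix a assume aa: "\<bar>a - min ell \<gamma>\<bar> \<ge> \<epsilon>"
      have "ereal (T z + \<eta>) \<le> (J1 a + J1 (2*z - a))/2 + J2 z" using H aa by blast
      then have "ereal (T z + \<eta>) \<le> (J1 a + J1 (2*z - a))/2 + ereal s" using real by simp
      then show "ereal (T z + \<eta> - s) \<le> (J1 a + J1 (2*z - a))/2"
        by (cases "(J1 a + J1 (2*z - a))/2") auto
    qed
    then show ?thesis using real Gell unfolding X_def[symmetric] T_def
      by (cases X) auto
  qed
qed

end


theorem lemma4p1:
  fixes J1 J2 \<Psi> :: "real \<Rightarrow> ereal"
    and \<alpha> c1 c2 \<delta>1 \<delta>2 \<gamma> J0inf ell :: real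
  assumes J1_ninf: "\<And>z. J1 z \<noteq> -\<infinity>"
      and J2_ninf: "\<And>z. J2 z \<noteq> -\<infinity>"
      \<comment> \<open>[LJ1]\<close>
      and LJ1: "{z. J0fun J1 J2 z = biconj (J0fun J1 J2) z}
                  \<inter> {z. locally_affine_at (J0fun J1 J2) z} = {}"
      \<comment> \<open>[LJ2]\<close>
      and LJ2: "\<And>z. z \<in> edom (J0fun J1 J2) \<Longrightarrow> J0fun J1 J2 z = biconj (J0fun J1 J2) z \<Longrightarrow>
                  (\<exists>!p. fst p + snd p = 2 * z \<and>
                        J0fun J1 J2 z = J2 z + (J1 (fst p) + J1 (snd p)) / 2)"
      \<comment> \<open>[LJ3]\<close>
      and alpha: "0 < \<alpha>" "\<alpha> \<le> 1"
      and J1_C1a: "C1alpha_on_dom \<alpha> J1"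
      and J2_C1a: "C1alpha_on_dom \<alpha> J2"
      and J0_C1: "C1_on_dom (J0fun J1 J2)"
      and dom_eq: "edom J1 = edom J2"
      and dom_pos: "{0<..} \<subseteq> edom J1"
      and J1_lim: "(J1 \<longlongrightarrow> 0) at_top"
      and J2_lim: "(J2 \<longlongrightarrow> 0) at_top"
      and J0_lim: "(J0fun J1 J2 \<longlongrightarrow> ereal J0inf) at_top"
      \<comment> \<open>[LJ4]\<close>
      and Psi_nonneg: "\<And>z. \<Psi> z \<ge> 0"
      and Psi_convex: "econvex_on UNIV \<Psi>"
      and Psi_superlin: "((\<lambda>z. \<Psi> z / ereal \<bar>z\<bar>) \<longlongrightarrow> \<infinity>) at_bot"
      and c_pos: "c1 > 0" "c2 > 0"
      and J1_bounds: "\<And>z. ereal c1 * (\<Psi> z - 1) \<le> J1 z"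
                     "\<And>z. J1 z \<le> ereal c2 * max (\<Psi> z) (ereal \<bar>z\<bar>)"
      and J2_bounds: "\<And>z. ereal c1 * (\<Psi> z - 1) \<le> J2 z"
                     "\<And>z. J2 z \<le> ereal c2 * max (\<Psi> z) (ereal \<bar>z\<bar>)"
      and deltas_pos: "\<delta>1 > 0" "\<delta>2 > 0" and gamma_pos: "\<gamma> > 0"
      and argmin_J1: "{x. \<forall>z. J1 x \<le> J1 z} = {\<delta>1}"
      and argmin_J2: "{x. \<forall>z. J2 x \<le> J2 z} = {\<delta>2}"
      and argmin_J0: "{x. \<forall>z. J0fun J1 J2 x \<le> J0fun J1 J2 z} = {\<gamma>}"
      and J1_sconv: "estrict_convex_on ({..<\<delta>1} \<inter> edom J1) J1"
      and J2_sconv: "estrict_convex_on ({..<\<delta>2} \<inter> edom J2) J2"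
      and J0_gamma: "J0fun J1 J2 \<gamma> < ereal J0inf"
      and J0_convex_left: "\<And>z. z \<le> \<gamma> \<Longrightarrow> J0fun J1 J2 z = biconj (J0fun J1 J2) z"
      \<comment> \<open>the lemma\<close>
      and ell_pos: "ell > 0"
  shows "\<exists>D. ((\<lambda>z. real_of_ereal (biconj (J0fun J1 J2) z)) has_real_derivative D) (at ell) \<and>
           (\<forall>\<epsilon>>0. \<exists>\<eta>>0. \<forall>z::real.
              Inf ((\<lambda>a. (J1 a + J1 (2 * z - a)) / 2) ` {a. \<bar>a - min ell \<gamma>\<bar> \<ge> \<epsilon>})
                + J2 z - ereal (D * (z - ell)) - biconj (J0fun J1 J2) ell \<ge> ereal \<eta>)"
  proof -
  interpret LJ J1 J2 \<Psi> c1 c2 \<gamma> J0inf ell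
    by unfold_locales (fact J1_ninf J2_ninf LJ1 LJ2 J0_C1 dom_eq dom_pos J0_lim Psi_nonneg Psi_superlin
        c_pos J1_bounds J2_bounds gamma_pos argmin_J0 J0_gamma J0_convex_left ell_pos)+
  obtain D where D: "(g has_real_derivative D) (at ell)" "\<gamma> \<le> ell \<longrightarrow> D = 0"
    using G_deriv by blast
  interpret E: LJE J1 J2 \<Psi> c1 c2 \<gamma> J0inf ell D \<alpha>
    by unfold_locales (use D J1_C1a J2_C1a in auto)
  have "\<forall>\<epsilon>>0. \<exists>\<eta>>0. \<forall>z::real.
              Inf ((\<lambda>a. (J1 a + J1 (2 * z - a)) / 2) ` {a. \<bar>a - min ell \<gamma>\<bar> \<ge> \<epsilon>})
                + J2 z - ereal (D * (z - ell)) - biconj (J0fun J1 J2) ell \<ge> ereal \<eta>"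
  proof (intro allI impI)
    fix \<epsilon> :: real assume "\<epsilon> > 0"
    then obtain \<eta> where "\<eta> > 0" and H: "\<forall>z a. \<epsilon> \<le> \<bar>a - min ell \<gamma>\<bar> \<longrightarrow> ereal (E.T z + \<eta>) \<le> (J1 a + J1 (2*z - a))/2 + J2 z"
      using E.main by blast
    then show "\<exists>\<eta>>0. \<forall>z::real.
              Inf ((\<lambda>a. (J1 a + J1 (2 * z - a)) / 2) ` {a. \<bar>a - min ell \<gamma>\<bar> \<ge> \<epsilon>})
                + J2 z - ereal (D * (z - ell)) - biconj (J0fun J1 J2) ell \<ge> ereal \<eta>"
      using E.ineq[OF H] by blast
  qed
  moreover have "((\<lambda>z. real_of_ereal (biconj (J0fun J1 J2) z)) has_real_derivative D) (at ell)"
    using D(1) unfolding g_def .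
  ultimately show ?thesis by blast
qed

end
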